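(* Let $J$ be an instance of broadcast scheduling with maximum flow time, let $L^*$ be its optimal maximum flow time, and let $0<\epsilon\le1$ be such that $\epsilon L^*$ is a positive integer. Let $J'$ be the modified instance defined below. Then there exists a schedule $\sigma'$ for $J'$ with maximum flow time at most $(1+2\epsilon)L^*$. Further, any schedule $\sigma'$ for $J'$ can be converted into a feasible schedule $\sigma$ for the original instance $J$ such that $F^\sigma_\rho-F^{\sigma'}_\rho\le 2\epsilon L^*$ for every request $\rho$.
   Context: Broadcast scheduling with maximum flow time: pages $\mathcal{P}$ (unit-sized), requests $\rho$ with integer release time $r_\rho\ge0$ and requested page $p_\rho$. In the original instance $J$ a feasible schedule transmits at most one page at each positive integer time. In a schedule $\sigma$, the completion time $C^\sigma_\rho$ is the first time strictly greater than $r_\rho$ at which $p_\rho$ is transmitted, and the flow time is $F^\sigma_\rho=C^\sigma_\rho-r_\rho$. The modified instance $J'$: each request $\rho$ of $J$ is kept with the same page but its release time is shifted to $\epsilon L^*\lceil r_\rho/(\epsilon L^* )\rceil$; in $J'$ a schedule may transmit pages only at times that are integral multiples of $\epsilon L^*$, and at most $\epsilon L^*$ pages at each such time. Completion and flow times in $J'$ are defined as in $J$ (with respect to the shifted release times); the flow time of $\rho$ in $J$ under $\sigma$ uses the original release time. *)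

theory Defs
  imports Complex_Main
begin

definition served :: "(nat \<Rightarrow> 'p set) \<Rightarrow> ('q \<Rightarrow> nat) \<Rightarrow> ('q \<Rightarrow> 'p) \<Rightarrow> 'q \<Rightarrow> bool" where
  "served S rel pg \<rho> \<longleftrightarrow> (\<exists>t. rel \<rho> < t \<and> pg \<rho> \<in> S t)"

definition serves_all :: "'q set \<Rightarrow> (nat \<Rightarrow> 'p set) \<Rightarrow> ('q \<Rightarrow> nat) \<Rightarrow> ('q \<Rightarrow> 'p) \<Rightarrow> bool" where
  "serves_all R S rel pg \<longleftrightarrow> (\<forall>\<rho>\<in>R. served S rel pg \<rho>)"

definition completion :: "(nat \<Rightarrow> 'p set) \<Rightarrow> ('q \<Rightarrow> nat) \<Rightarrow> ('q \<Rightarrow> 'p) \<Rightarrow> 'q \<Rightarrow> nat" where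
  "completion S rel pg \<rho> = (LEAST t. rel \<rho> < t \<and> pg \<rho> \<in> S t)"

definition flow :: "(nat \<Rightarrow> 'p set) \<Rightarrow> ('q \<Rightarrow> nat) \<Rightarrow> ('q \<Rightarrow> 'p) \<Rightarrow> 'q \<Rightarrow> nat" where
  "flow S rel pg \<rho> = completion S rel pg \<rho> - rel \<rho>"

definition max_flow :: "'q set \<Rightarrow> (nat \<Rightarrow> 'p set) \<Rightarrow> ('q \<Rightarrow> nat) \<Rightarrow> ('q \<Rightarrow> 'p) \<Rightarrow> nat" where
  "max_flow R S rel pg = Max (insert 0 ((\<lambda>\<rho>. flow S rel pg \<rho>) ` R))"

definition feasible :: "(nat \<Rightarrow> 'p set) \<Rightarrow> bool" where
  "feasible S \<longleftrightarrow> S 0 = {} \<and> (\<forall>t. finite (S t) \<and> card (S t) \<le> 1)"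

text \<open>Feasible schedule for the modified instance with granularity D = \<epsilon> L*: transmissions only at
integral multiples of D, at most D pages at each such time.\<close>
definition feasible_mod :: "nat \<Rightarrow> (nat \<Rightarrow> 'p set) \<Rightarrow> bool" where
  "feasible_mod D S \<longleftrightarrow> (\<forall>t. finite (S t) \<and> card (S t) \<le> D \<and> (S t \<noteq> {} \<longrightarrow> D dvd t))"

definition opt_max_flow :: "'q set \<Rightarrow> ('q \<Rightarrow> nat) \<Rightarrow> ('q \<Rightarrow> 'p) \<Rightarrow> nat" where
  "opt_max_flow R rel pg =
     (LEAST L. \<exists>S::nat \<Rightarrow> 'p set. feasible S \<and> serves_all R S rel pg \<and> max_flow R S rel pg = L)"

definition shift_rel :: "nat \<Rightarrow> ('q \<Rightarrow> nat) \<Rightarrow> 'q \<Rightarrow> nat" where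
  "shift_rel D rel \<rho> = D * nat \<lceil>real (rel \<rho>) / real D\<rceil>"

end

theory Submission
  imports Defs
begin

lemma completion_props:
  assumes "served S rel pg \<rho>"
  shows "rel \<rho> < completion S rel pg \<rho> \<and> pg \<rho> \<in> S (completion S rel pg \<rho>)"
  using assms unfolding served_def completion_def by (metis (mono_tags, lifting) LeastI)

lemma completion_le:
  assumes "rel \<rho> < t" "pg \<rho> \<in> S t"
  shows "completion S rel pg \<rho> \<le> t"
  using assms unfolding completion_def by (simp add: Least_le)

lemma flow_le_max:
  assumes "finite R" "\<rho> \<in> R"
  shows "flow S rel pg \<rho> \<le> max_flow R S rel pg"
  unfolding max_flow_def using assms by (intro Max_ge) auto

lemma shift_bounds:
  assumes "D > 0"
  shows "rel \<rho> \<le> shift_rel D rel \<rho> \<and> shift_rel D rel \<rho> < rel \<rho> + D"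
proof -
  let ?c = "\<lceil>real (rel \<rho>) / real D\<rceil>"
  have x0: "0 \<le> real (rel \<rho>) / real D" by simp
  have c0: "?c \<ge> 0" using x0 by (simp; linarith)
  have r: "real (shift_rel D rel \<rho>) = real D * real_of_int ?c"
    unfolding shift_rel_def using c0 by simp
  have a: "real (rel \<rho>) / real D \<le> real_of_int ?c" by (rule le_of_int_ceiling)
  have b: "real_of_int ?c < real (rel \<rho>) / real D + 1"
    using ceiling_correct[of "real (rel \<rho>) / real D"] by linarith
  have Dp: "real D > 0" using assms by simp
  have "real (rel \<rho>) \<le> real D * real_of_int ?c" by (metis a pos_divide_le_eq[OF Dp] mult.commute)
  moreover have "real D * real_of_int ?c < real (rel \<rho>) + real D"
  proof -
    have "real D * real_of_int ?c < real D * (real (rel \<rho>) / real D + 1)"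
      by (rule mult_strict_left_mono[OF b Dp])
    also have "\<dots> = real (rel \<rho>) + real D" using Dp by (simp add: field_simps)
    finally show ?thesis .
  qed
  ultimately show ?thesis using r by linarith
qed

lemma exists_schedule:
  assumes "finite R"
  shows "\<exists>S::nat \<Rightarrow> 'p set. feasible S \<and> serves_all R S rel (pg :: 'q \<Rightarrow> 'p)"
proof -
  obtain f :: "'q \<Rightarrow> nat" where f: "inj_on f R"
    using assms by (metis finite_imp_inj_to_nat_seg)
  define M where "M = Max (insert 0 (rel ` R))"
  have M: "\<And>\<rho>. \<rho> \<in> R \<Longrightarrow> rel \<rho> \<le> M" unfolding M_def using assms by (intro Max_ge) auto
  define S where "S t = pg ` {\<rho>\<in>R. f \<rho> + M + 1 = t}" for t
  have "feasible S"
    unfolding feasible_def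
  proof (intro conjI allI)
    show "S 0 = {}" unfolding S_def by auto
    fix t
    have sub: "{\<rho>\<in>R. f \<rho> + M + 1 = t} \<subseteq> R" by auto
    have fin: "finite {\<rho>\<in>R. f \<rho> + M + 1 = t}" using assms by auto
    have "card {\<rho>\<in>R. f \<rho> + M + 1 = t} \<le> Suc 0"
      using card_le_Suc0_iff_eq[OF fin] f by (auto dest: inj_onD)
    moreover have "card (S t) \<le> card {\<rho>\<in>R. f \<rho> + M + 1 = t}"
      unfolding S_def by (rule card_image_le[OF fin])
    ultimately show "card (S t) \<le> 1" by simp
    show "finite (S t)" unfolding S_def using assms by auto
  qed
  moreover have "serves_all R S rel pg"
    unfolding serves_all_def served_def
  proof
    fix \<rho> assume "\<rho> \<in> R"
    then have "rel \<rho> < f \<rho> + M + 1" "pg \<rho> \<in> S (f \<rho> + M + 1)"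
      using M[of \<rho>] unfolding S_def by auto
    then show "\<exists>t>rel \<rho>. pg \<rho> \<in> S t" by blast
  qed
  ultimately show ?thesis by blast
qed


definition enum_set :: "'a set \<Rightarrow> 'a list" where
  "enum_set A = (SOME xs. set xs = A \<and> distinct xs)"

lemma enum_set:
  assumes "finite A"
  shows "set (enum_set A) = A \<and> length (enum_set A) = card A"
proof -
  have "set (enum_set A) = A \<and> distinct (enum_set A)"
    unfolding enum_set_def using finite_distinct_list[OF assms] by (rule someI_ex)
  then show ?thesis using distinct_card by metis
qed

theorem lemma2p2:
  fixes R :: "'q set" and rel :: "'q \<Rightarrow> nat" and pg :: "'q \<Rightarrow> 'p"
    and \<epsilon> :: real and D :: nat
  assumes "finite R"
    and "0 < \<epsilon>" and "\<epsilon> \<le> 1"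
    and "D > 0" and "real D = \<epsilon> * real (opt_max_flow R rel pg)"
  shows "(\<exists>S'::nat \<Rightarrow> 'p set. feasible_mod D S' \<and> serves_all R S' (shift_rel D rel) pg \<and>
            real (max_flow R S' (shift_rel D rel) pg) \<le> (1 + 2 * \<epsilon>) * real (opt_max_flow R rel pg))
       \<and> (\<forall>S'::nat \<Rightarrow> 'p set. feasible_mod D S' \<and> serves_all R S' (shift_rel D rel) pg \<longrightarrow>
            (\<exists>S::nat \<Rightarrow> 'p set. feasible S \<and> serves_all R S rel pg \<and>
               (\<forall>\<rho>\<in>R. real (flow S rel pg \<rho>) - real (flow S' (shift_rel D rel) pg \<rho>)
                        \<le> 2 * \<epsilon> * real (opt_max_flow R rel pg))))"
proof -
  define L where "L = opt_max_flow R rel pg"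
  define r' where "r' = shift_rel D rel"
  have DL: "real D = \<epsilon> * real L" using assms(5) unfolding L_def by simp
  have twoD: "2 * \<epsilon> * real L = 2 * real D" using DL by simp
  have oneD: "(1 + 2 * \<epsilon>) * real L = real L + 2 * real D" using DL by (simp add: algebra_simps)
  have r'b: "\<And>\<rho>. rel \<rho> \<le> r' \<rho> \<and> r' \<rho> < rel \<rho> + D"
    unfolding r'_def by (rule shift_bounds[OF assms(4)])
  obtain S00 :: "nat \<Rightarrow> 'p set" where S00: "feasible S00 \<and> serves_all R S00 rel pg"
    using exists_schedule[OF assms(1)] by blast
  have ex: "\<exists>L (S::nat \<Rightarrow> 'p set). feasible S \<and> serves_all R S rel pg \<and> max_flow R S rel pg = L"
    using S00 by blast
  obtain S0 :: "nat \<Rightarrow> 'p set" where S0: "feasible S0" "serves_all R S0 rel pg"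
      "max_flow R S0 rel pg = L"
    using LeastI_ex[OF ex] unfolding L_def opt_max_flow_def by blast
  have part1: "\<exists>S'::nat \<Rightarrow> 'p set. feasible_mod D S' \<and> serves_all R S' r' pg \<and>
            max_flow R S' r' pg \<le> L + 2 * D"
  proof -
    define S' where "S' t = (if D dvd t then (\<Union>s\<in>{t - 2*D<..t - D}. S0 s) else {})" for t
    have fe: "feasible_mod D S'"
      unfolding feasible_mod_def
    proof (intro allI conjI impI)
      fix t
      show "finite (S' t)" unfolding S'_def using S0(1) unfolding feasible_def by auto
      show "S' t \<noteq> {} \<Longrightarrow> D dvd t" unfolding S'_def by (auto split: if_splits)
      have "card (\<Union>s\<in>{t - 2*D<..t - D}. S0 s) \<le> (\<Sum>s\<in>{t - 2*D<..t - D}. card (S0 s))"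
        by (rule card_UN_le) simp
      also have "\<dots> \<le> (\<Sum>s\<in>{t - 2*D<..t - D}. 1)"
        by (rule sum_mono) (use S0(1) in \<open>auto simp: feasible_def\<close>)
      also have "\<dots> \<le> D" by simp
      finally show "card (S' t) \<le> D" unfolding S'_def by auto
    qed
    have main: "\<And>\<rho>. \<rho> \<in> R \<Longrightarrow> served S' r' pg \<rho> \<and> flow S' r' pg \<rho> \<le> L + 2 * D"
    proof -
      fix \<rho> assume \<rho>: "\<rho> \<in> R"
      define C where "C = completion S0 rel pg \<rho>"
      have C: "rel \<rho> < C" "pg \<rho> \<in> S0 C"
        using completion_props[of S0 rel pg \<rho>] S0(2) \<rho> unfolding serves_all_def C_def by auto
      have fC: "C - rel \<rho> \<le> L"
        using flow_le_max[OF assms(1) \<rho>, of S0 rel pg] S0(3) unfolding flow_def C_def by simp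
      define k where "k = (C - 1) div D"
      define t where "t = (k + 2) * D"
      have k1: "k * D \<le> C - 1" unfolding k_def by (rule div_times_less_eq_dividend)
      have k2: "C - 1 < (k + 1) * D" unfolding k_def using assms(4)
        by (metis add.commute dividend_less_div_times mult_Suc plus_1_eq_Suc)
      have t1: "t - 2 * D = k * D" unfolding t_def by (simp add: algebra_simps)
      have t2: "t - D = (k + 1) * D" unfolding t_def by (simp add: algebra_simps)
      have dv: "D dvd t" unfolding t_def by simp
      have inS: "pg \<rho> \<in> S' t" unfolding S'_def using dv t1 t2 k1 k2 C
        by (auto intro!: bexI[of _ C])
      have tgt: "r' \<rho> < t" using r'b[of \<rho>] k2 C unfolding t_def by (simp add: algebra_simps, linarith)
      have "served S' r' pg \<rho>" unfolding served_def using tgt inS by blast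
      moreover have "completion S' r' pg \<rho> \<le> t" using tgt inS by (rule completion_le)
      moreover have "t \<le> C - 1 + 2 * D" using k1 unfolding t_def by (simp add: algebra_simps)
      ultimately show "served S' r' pg \<rho> \<and> flow S' r' pg \<rho> \<le> L + 2 * D"
        using fC r'b[of \<rho>] C unfolding flow_def by auto
    qed
    have "serves_all R S' r' pg" unfolding serves_all_def using main by blast
    moreover have "max_flow R S' r' pg \<le> L + 2 * D"
      unfolding max_flow_def using main assms(1) by (subst Max_le_iff) auto
    ultimately show ?thesis using fe by blast
  qed
  have part2: "\<And>S'::nat \<Rightarrow> 'p set. feasible_mod D S' \<Longrightarrow> serves_all R S' r' pg \<Longrightarrow>
            (\<exists>S::nat \<Rightarrow> 'p set. feasible S \<and> serves_all R S rel pg \<and>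
               (\<forall>\<rho>\<in>R. real (flow S rel pg \<rho>) - real (flow S' r' pg \<rho>) \<le> 2 * real D))"
  proof -
    fix S' :: "nat \<Rightarrow> 'p set"
    assume fm: "feasible_mod D S'" and sa: "serves_all R S' r' pg"
    define S where "S t = (if t = 0 then {} else
       (if (t - 1) mod D < length (enum_set (S' ((t - 1) div D * D)))
        then {enum_set (S' ((t - 1) div D * D)) ! ((t - 1) mod D)} else {}))" for t
    have fe: "feasible S" unfolding feasible_def S_def by auto
    have main: "\<And>\<rho>. \<rho> \<in> R \<Longrightarrow> served S rel pg \<rho> \<and>
        real (flow S rel pg \<rho>) - real (flow S' r' pg \<rho>) \<le> 2 * real D"
    proof -
      fix \<rho> assume \<rho>: "\<rho> \<in> R"
      define C where "C = completion S' r' pg \<rho>"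
      have C: "r' \<rho> < C" "pg \<rho> \<in> S' C"
        using completion_props[of S' r' pg \<rho>] sa \<rho> unfolding serves_all_def C_def by auto
      have dC: "D dvd C" using fm C(2) unfolding feasible_mod_def by blast
      have finC: "finite (S' C)" and cardC: "card (S' C) \<le> D" using fm unfolding feasible_mod_def by auto
      define xs where "xs = enum_set (S' C)"
      have xs: "set xs = S' C" "length xs \<le> D" using enum_set[OF finC] cardC unfolding xs_def by auto
      obtain j where j: "j < length xs" "xs ! j = pg \<rho>"
        using C(2) xs(1) by (metis in_set_conv_nth)
      have jD: "j < D" using j xs by simp
      define t where "t = C + j + 1"
      obtain m where m: "C = D * m" using dC by blast
      have dv: "(t - 1) div D = m" unfolding t_def m using jD by simp
      have md: "(t - 1) mod D = j" unfolding t_def m using jD by simp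
      have inS: "pg \<rho> \<in> S t" unfolding S_def using dv md j xs_def m t_def
        by (simp add: mult.commute)
      have tgt: "rel \<rho> < t" using C r'b[of \<rho>] unfolding t_def by simp
      have "served S rel pg \<rho>" unfolding served_def using tgt inS by blast
      moreover have "completion S rel pg \<rho> \<le> t" using tgt inS by (rule completion_le)
      ultimately show "served S rel pg \<rho> \<and>
        real (flow S rel pg \<rho>) - real (flow S' r' pg \<rho>) \<le> 2 * real D"
        using C r'b[of \<rho>] jD unfolding flow_def C_def[symmetric] t_def by auto
    qed
    have "serves_all R S rel pg" unfolding serves_all_def using main by blast
    then show "\<exists>S::nat \<Rightarrow> 'p set. feasible S \<and> serves_all R S rel pg \<and>
               (\<forall>\<rho>\<in>R. real (flow S rel pg \<rho>) - real (flow S' r' pg \<rho>) \<le> 2 * real D)"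
      using fe main by blast
  qed
  show ?thesis
    unfolding L_def[symmetric] r'_def[symmetric] twoD oneD
  proof (intro conjI allI impI)
    show "\<exists>S'::nat \<Rightarrow> 'p set. feasible_mod D S' \<and> serves_all R S' r' pg \<and>
            real (max_flow R S' r' pg) \<le> real L + 2 * real D"
      using part1 by (metis (no_types, lifting) of_nat_add of_nat_le_iff of_nat_mult of_nat_numeral)
    fix S' :: "nat \<Rightarrow> 'p set"
    assume "feasible_mod D S' \<and> serves_all R S' r' pg"
    then show "\<exists>S::nat \<Rightarrow> 'p set. feasible S \<and> serves_all R S rel pg \<and>
               (\<forall>\<rho>\<in>R. real (flow S rel pg \<rho>) - real (flow S' r' pg \<rho>) \<le> 2 * real D)"
      using part2 by blast
  qed
qed

end
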